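(* There is an absolute constant $c>0$ such that for every $n\ge4$ that is a power of $4$ and every positive definite $A\in\mathbb{R}^{n\times n}$, \[\operatorname{Tr}(A)\cdot\max_{1\le i\le n}(v^i)^TA^{-1}v^i\ \ge\ c\,n\lg^2 n,\] where $v^i\in\mathbb{R}^n$ has its first $i$ coordinates equal to $1$ and its last $n-i$ coordinates equal to $0$. Moreover, for every power of $2$, $n\ge4$, the matrix $A$ with $A_{ij}=\lg n-k$ ($k$ the smallest nonnegative integer with $\lfloor (i-1)/2^k\rfloor=\lfloor (j-1)/2^k\rfloor$) satisfies $\operatorname{Tr}(A)\cdot\max_i (v^i)^TA^{-1}v^i\le n\lg^2 n$.
   Context: $\lg$ is the base-2 logarithm. *)

theory Defs
  imports Complex_Main
begin

text \<open>Real n-by-n matrices are represented as functions nat => nat => real,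
  with (0-based) indices ranging over {0..<n}; entries outside are irrelevant.\<close>

definition lg :: "real \<Rightarrow> real" where
  "lg x = log 2 x"

definition mat_trace :: "nat \<Rightarrow> (nat \<Rightarrow> nat \<Rightarrow> real) \<Rightarrow> real" where
  "mat_trace n A = (\<Sum>i<n. A i i)"

definition pos_definite :: "nat \<Rightarrow> (nat \<Rightarrow> nat \<Rightarrow> real) \<Rightarrow> bool" where
  "pos_definite n A \<longleftrightarrow>
     (\<forall>i<n. \<forall>j<n. A i j = A j i) \<and>
     (\<forall>x :: nat \<Rightarrow> real. (\<exists>i<n. x i \<noteq> 0) \<longrightarrow> (\<Sum>i<n. \<Sum>j<n. x i * A i j * x j) > 0)"

definition is_inverse :: "nat \<Rightarrow> (nat \<Rightarrow> nat \<Rightarrow> real) \<Rightarrow> (nat \<Rightarrow> nat \<Rightarrow> real) \<Rightarrow> bool" where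
  "is_inverse n A B \<longleftrightarrow>
     (\<forall>i<n. \<forall>j<n. (\<Sum>k<n. A i k * B k j) = (if i = j then 1 else 0)) \<and>
     (\<forall>i<n. \<forall>j<n. (\<Sum>k<n. B i k * A k j) = (if i = j then 1 else 0))"

definition mat_inv :: "nat \<Rightarrow> (nat \<Rightarrow> nat \<Rightarrow> real) \<Rightarrow> (nat \<Rightarrow> nat \<Rightarrow> real)" where
  "mat_inv n A = (SOME B. is_inverse n A B)"

definition vone :: "nat \<Rightarrow> nat \<Rightarrow> real" where
  "vone i k = (if k < i then 1 else 0)"

definition quad_form :: "nat \<Rightarrow> (nat \<Rightarrow> nat \<Rightarrow> real) \<Rightarrow> (nat \<Rightarrow> real) \<Rightarrow> real" where
  "quad_form n M x = (\<Sum>k<n. \<Sum>l<n. x k * M k l * x l)"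

definition prefix_cost :: "nat \<Rightarrow> (nat \<Rightarrow> nat \<Rightarrow> real) \<Rightarrow> real" where
  "prefix_cost n A = mat_trace n A * Max ((\<lambda>i. quad_form n (mat_inv n A) (vone i)) ` {1..n})"

text \<open>The explicit matrix: with 1-based indices i,j, A_ij = lg n - k, k least with
  floor((i-1)/2^k) = floor((j-1)/2^k). Here i,j are 0-based (i.e. i-1, j-1).\<close>
definition tree_mat :: "nat \<Rightarrow> nat \<Rightarrow> nat \<Rightarrow> real" where
  "tree_mat n i j = lg (real n) - real (LEAST k::nat. i div 2 ^ k = j div 2 ^ k)"

end

theory Submission
  imports Defs "Jordan_Normal_Form.Determinant"
begin


lemma inv_exists:
  fixes A :: "nat \<Rightarrow> nat \<Rightarrow> real"
  assumes inj: "\<And>x. (\<forall>i<n. (\<Sum>j<n. A i j * x j) = 0) \<Longrightarrow> (\<forall>i<n. x i = 0)"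
  shows "\<exists>B. is_inverse n A B"
proof -
  define A' where "A' = mat n n (\<lambda>(i,j). A i j)"
  have cA: "A' \<in> carrier_mat n n" unfolding A'_def by auto
  have "det A' \<noteq> 0"
  proof
    assume "det A' = 0"
    then obtain v where v: "v \<in> carrier_vec n" "v \<noteq> 0\<^sub>v n" "A' *\<^sub>v v = 0\<^sub>v n"
      using det_0_iff_vec_prod_zero[OF cA] by auto
    have "\<forall>i<n. (\<Sum>j<n. A i j * v $ j) = 0"
    proof (intro allI impI)
      fix i assume i: "i < n"
      have "(A' *\<^sub>v v) $ i = 0" using v(3) i by simp
      moreover have "(A' *\<^sub>v v) $ i = (\<Sum>j<n. A i j * v $ j)"
        using i v(1) cA unfolding A'_def
        by (simp add: scalar_prod_def row_def lessThan_atLeast0)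
      ultimately show "(\<Sum>j<n. A i j * v $ j) = 0" by simp
    qed
    from inj[OF this] have "v = 0\<^sub>v n" using v(1) by (intro eq_vecI) auto
    with v(2) show False by simp
  qed
  from det_non_zero_imp_unit[OF cA this, of undefined]
  obtain B' where B': "B' \<in> carrier_mat n n" "A' * B' = 1\<^sub>m n" "B' * A' = 1\<^sub>m n"
    unfolding Units_def ring_mat_def by auto
  define B where "B i j = B' $$ (i,j)" for i j
  have "is_inverse n A B"
    unfolding is_inverse_def
  proof (intro conjI allI impI)
    fix i j assume i: "i < n" and j: "j < n"
    have "(A' * B') $$ (i,j) = (\<Sum>k<n. A i k * B k j)"
      using i j B'(1) cA unfolding A'_def B_def
      by (simp add: scalar_prod_def row_def col_def lessThan_atLeast0)
    then show "(\<Sum>k<n. A i k * B k j) = (if i = j then 1 else 0)"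
      using B'(2) i j by simp
    have "(B' * A') $$ (i,j) = (\<Sum>k<n. B i k * A k j)"
      using i j B'(1) cA unfolding A'_def B_def
      by (simp add: scalar_prod_def row_def col_def lessThan_atLeast0)
    then show "(\<Sum>k<n. B i k * A k j) = (if i = j then 1 else 0)"
      using B'(3) i j by simp
  qed
  then show ?thesis by blast
qed

lemma pd_inv:
  assumes "pos_definite n A"
  shows "is_inverse n A (mat_inv n A)"
proof -
  have "\<exists>B. is_inverse n A B"
  proof (rule inv_exists)
    fix x assume h: "\<forall>i<n. (\<Sum>j<n. A i j * x j) = 0"
    show "\<forall>i<n. x i = 0"
    proof (rule ccontr)
      assume "\<not> (\<forall>i<n. x i = 0)"
      then have "(\<Sum>i<n. \<Sum>j<n. x i * A i j * x j) > 0"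
        using assms unfolding pos_definite_def by auto
      moreover have "(\<Sum>i<n. \<Sum>j<n. x i * A i j * x j) = (\<Sum>i<n. x i * (\<Sum>j<n. A i j * x j))"
        by (simp add: sum_distrib_left mult.assoc)
      ultimately show False using h by simp
    qed
  qed
  then show ?thesis unfolding mat_inv_def by (rule someI_ex)
qed



definition bil :: "nat \<Rightarrow> (nat \<Rightarrow> nat \<Rightarrow> real) \<Rightarrow> (nat \<Rightarrow> real) \<Rightarrow> (nat \<Rightarrow> real) \<Rightarrow> real" where
  "bil n A x y = (\<Sum>k<n. \<Sum>l<n. x k * A k l * y l)"

lemma bil_alt: "bil n A x y = (\<Sum>k<n. x k * (\<Sum>l<n. A k l * y l))"
  unfolding bil_def by (simp add: sum_distrib_left mult.assoc)

lemma bil_expand: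
  "bil n A (\<lambda>k. t * y k - w k) (\<lambda>k. t * y k - w k) =
   t^2 * bil n A y y - t * bil n A y w - t * bil n A w y + bil n A w w"
  unfolding bil_def
  by (simp add: algebra_simps sum_subtractf sum.distrib sum_distrib_left power2_eq_square)

lemma bil_sym: "(\<forall>i<n. \<forall>j<n. A i j = A j i) \<Longrightarrow> bil n A x y = bil n A y x"
  unfolding bil_def
  by (subst sum.swap) (auto intro!: sum.cong simp: mult.commute mult.left_commute)

lemma pd_nonneg: "pos_definite n A \<Longrightarrow> bil n A x x \<ge> 0"
  unfolding pos_definite_def bil_def
  by (cases "\<exists>i<n. x i \<noteq> 0") (auto intro: less_imp_le)

lemma cs_ineq:
  assumes pd: "pos_definite n A" and inv: "is_inverse n A B"
  shows "2 * t * (\<Sum>k<n. y k * v k) \<le> t^2 * quad_form n A y + quad_form n B v"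
proof -
  define w where "w k = (\<Sum>l<n. B k l * v l)" for k
  have Aw: "(\<Sum>l<n. A k l * w l) = v k" if k: "k < n" for k
  proof -
    have "(\<Sum>l<n. A k l * w l) = (\<Sum>l<n. \<Sum>m<n. A k l * B l m * v m)"
      unfolding w_def by (simp add: sum_distrib_left mult.assoc)
    also have "\<dots> = (\<Sum>m<n. (\<Sum>l<n. A k l * B l m) * v m)"
      by (subst sum.swap) (simp add: sum_distrib_right)
    also have "\<dots> = (\<Sum>m<n. (if k = m then v m else 0))"
      using inv k unfolding is_inverse_def by (intro sum.cong) auto
    also have "\<dots> = v k" using k by (simp add: sum.delta)
    finally show ?thesis .
  qed
  have sym: "\<forall>i<n. \<forall>j<n. A i j = A j i" using pd unfolding pos_definite_def by auto
  have e1: "bil n A y w = (\<Sum>k<n. y k * v k)"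
    unfolding bil_alt using Aw by (intro sum.cong) auto
  have e2: "bil n A w y = (\<Sum>k<n. y k * v k)"
    using e1 bil_sym[OF sym] by simp
  have e3: "bil n A w w = quad_form n B v"
  proof -
    have "bil n A w w = (\<Sum>k<n. w k * v k)"
      unfolding bil_alt using Aw by (intro sum.cong) auto
    also have "\<dots> = quad_form n B v"
      unfolding w_def quad_form_def
      by (simp add: sum_distrib_left sum_distrib_right mult.commute mult.left_commute)
    finally show ?thesis .
  qed
  have "0 \<le> bil n A (\<lambda>k. t * y k - w k) (\<lambda>k. t * y k - w k)" by (rule pd_nonneg[OF pd])
  also have "\<dots> = t^2 * quad_form n A y - 2 * t * (\<Sum>k<n. y k * v k) + quad_form n B v"
    unfolding bil_expand e1 e2 e3 by (simp add: quad_form_def bil_def)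
  finally show ?thesis by simp
qed



lemma sum_split: fixes f :: "nat \<Rightarrow> real" shows "(\<Sum>j<c*m. f j) = (\<Sum>q<c. \<Sum>r<m. f (q*m + r))"
proof (induction c)
  case 0 then show ?case by simp
next
  case (Suc c)
  have "(\<Sum>j<Suc c*m. f j) = (\<Sum>j\<in>{0..<c*m}. f j) + (\<Sum>j\<in>{c*m..<c*m+m}. f j)"
    by (simp add: lessThan_atLeast0 sum.atLeastLessThan_concat add.commute)
  also have "(\<Sum>j\<in>{c*m..<c*m+m}. f j) = (\<Sum>r<m. f (c*m + r))"
    using sum.shift_bounds_nat_ivl[of f 0 "c*m" m]
    by (simp add: lessThan_atLeast0 add.commute)
  finally show ?case using Suc by (simp add: lessThan_atLeast0)
qed

lemma sum_split4: fixes f :: "nat \<Rightarrow> real" shows "(\<Sum>j<4*m. f j) = (\<Sum>q<4. \<Sum>r<m. f (q*m + r))"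
  by (rule sum_split)


definition tau :: "nat \<Rightarrow> nat \<Rightarrow> real" where
  "tau q q' = (if q' = Suc q \<or> (q = 3 \<and> q' = 0) then 1 else 0) - 1/4"
lemma s4: fixes f :: "nat \<Rightarrow> real" shows "(\<Sum>q<4. f q) = f 0 + f 1 + f 2 + f 3"
  by (simp add: eval_nat_numeral)
lemma lt4: "(q::nat) < 4 \<Longrightarrow> q = 0 \<or> q = 1 \<or> q = 2 \<or> q = 3" by auto
lemma tau_row: "q < 4 \<Longrightarrow> (\<Sum>q'<4. tau q q') = 0"
  unfolding s4 by (drule lt4) (auto simp: tau_def)
lemma tau_orth: "q < 4 \<Longrightarrow> p < 4 \<Longrightarrow> (\<Sum>q'<4. tau q q' * tau p q') = (if q = p then 1 else 0) - 1/4"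
  unfolding s4 by (drule lt4, drule lt4) (auto simp: tau_def)
lemma tau_val: "(\<Sum>q'<4. \<Sum>q<4. tau q q' * (if q < q' then x else if q = q' then y else 0)) = 3/2 * x - y"
  unfolding s4 tau_def by (simp add: algebra_simps)

lemma fin: fixes m :: real assumes "m > 0" shows
  "(if q = p then (if r = s then 1 else 0) - 1/m else 0) + ((if q = p then 1 else 0) - 1/4) / m
   = (if q = p \<and> r = s then 1 else 0) - 1 / (4 * m)"
  using assms by (cases "q = p"; cases "r = s") (simp_all add: field_simps)

fun Y :: "nat \<Rightarrow> nat \<Rightarrow> nat \<Rightarrow> real" where
  "Y 0 k j = 0"
| "Y (Suc L) k j = (if k div 4^L = j div 4^L then Y L (k mod 4^L) (j mod 4^L) else 0)
      + tau (k div 4^L) (j div 4^L) / 4^L"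

lemma Y_step:
  assumes "r < 4^L" "r' < 4^L"
  shows "Y (Suc L) (q*4^L + r) (q'*4^L + r') = (if q = q' then Y L r r' else 0) + tau q q' / 4^L"
  using assms by simp

lemma decomp4:
  assumes "k < 4 * (m::nat)"
  obtains q r where "q < 4" "r < m" "k = q*m + r"
proof -
  have m: "m > 0" using assms by auto
  show ?thesis
    by (rule that[of "k div m" "k mod m"]) (use assms m in \<open>auto simp: less_mult_imp_div_less\<close>)
qed

lemma Y_row: "k < 4^L \<Longrightarrow> (\<Sum>j<4^L. Y L k j) = 0"
proof (induction L arbitrary: k)
  case 0 then show ?case by simp
next
  case (Suc L)
  define m :: nat where "m = 4^L"
  have m: "m > 0" unfolding m_def by simp
  from Suc.prems obtain q r where qr: "q < 4" "r < m" "k = q*m + r"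
    using decomp4[of k m] unfolding m_def by auto
  have "(\<Sum>j<4^Suc L. Y (Suc L) k j) = (\<Sum>q'<4. \<Sum>r'<m. Y (Suc L) (q*m+r) (q'*m + r'))"
    unfolding m_def qr(3) by (simp add: sum_split4 del: Y.simps)
  also have "\<dots> = (\<Sum>q'<4. \<Sum>r'<m. (if q = q' then Y L r r' else 0) + tau q q' / m)"
    using qr(2) unfolding m_def by (intro sum.cong refl) (simp del: Y.simps add: Y_step)
  also have "\<dots> = (\<Sum>q'<4. (if q = q' then (\<Sum>r'<m. Y L r r') else 0) + tau q q')"
    using m by (intro sum.cong refl) (simp add: sum.distrib)
  also have "\<dots> = 0"
    using Suc.IH[of r] qr unfolding m_def by (simp add: sum.distrib tau_row)
  finally show ?case .
qed

lemma Y_gram: "k < 4^L \<Longrightarrow> l < 4^L \<Longrightarrow>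
   (\<Sum>j<4^L. Y L k j * Y L l j) = (if k = l then 1 else 0) - 1/4^L"
proof (induction L arbitrary: k l)
  case 0 then show ?case by simp
next
  case (Suc L)
  define m :: nat where "m = 4^L"
  have m: "m > 0" unfolding m_def by simp
  from Suc.prems obtain q r where qr: "q < 4" "r < m" "k = q*m + r"
    using decomp4[of k m] unfolding m_def by auto
  from Suc.prems obtain p s where ps: "p < 4" "s < m" "l = p*m + s"
    using decomp4[of l m] unfolding m_def by auto
  have rowr: "(\<Sum>r'<m. Y L r r') = 0" using Y_row qr(2) unfolding m_def by blast
  have rows: "(\<Sum>r'<m. Y L s r') = 0" using Y_row ps(2) unfolding m_def by blast
  have "(\<Sum>j<4^Suc L. Y (Suc L) k j * Y (Suc L) l j) =
        (\<Sum>q'<4. \<Sum>r'<m. Y (Suc L) (q*m+r) (q'*m + r') * Y (Suc L) (p*m+s) (q'*m + r'))"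
    unfolding m_def qr(3) ps(3) by (simp add: sum_split4 del: Y.simps)
  also have "\<dots> = (\<Sum>q'<4. \<Sum>r'<m. ((if q = q' then Y L r r' else 0) + tau q q' / m)
                       * ((if p = q' then Y L s r' else 0) + tau p q' / m))"
    using qr(2) ps(2) unfolding m_def by (intro sum.cong refl) (simp del: Y.simps add: Y_step)
  also have "\<dots> = (\<Sum>q'<4. (if q' = q \<and> p = q then (\<Sum>r'<m. Y L r r' * Y L s r') else 0)
                     + tau q q' * tau p q' / m)"
  proof (intro sum.cong refl)
    fix q' :: nat
    have gen: "(\<Sum>r'<m. (a r' + t) * (b r' + u)) = (\<Sum>r'<m. a r' * b r') + t * (\<Sum>r'<m. b r')
                + u * (\<Sum>r'<m. a r') + real m * t * u" for a b :: "nat \<Rightarrow> real" and t u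
      by (simp add: algebra_simps sum.distrib sum_distrib_left)
    show "(\<Sum>r'<m. ((if q = q' then Y L r r' else 0) + tau q q' / m)
                       * ((if p = q' then Y L s r' else 0) + tau p q' / m)) =
          (if q' = q \<and> p = q then (\<Sum>r'<m. Y L r r' * Y L s r') else 0) + tau q q' * tau p q' / m"
      unfolding gen using rowr rows m by (cases "q = q'"; cases "p = q'") (auto simp: field_simps)
  qed
  also have "\<dots> = (if q = p then (\<Sum>r'<m. Y L r r' * Y L s r') else 0)
                   + (\<Sum>q'<4. tau q q' * tau p q') / m"
    using qr(1) by (simp add: sum.distrib sum_divide_distrib[symmetric] sum.delta)
  also have "\<dots> = (if k = l then 1 else 0) - 1/4^Suc L"
  proof -
    have IH: "(\<Sum>r'<m. Y L r r' * Y L s r') = (if r = s then 1 else 0) - 1/m"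
      using Suc.IH[of r s] qr ps unfolding m_def by simp
    have T: "(\<Sum>q'<4. tau q q' * tau p q') = (if q = p then 1 else 0) - 1/4"
      using tau_orth qr ps by simp
    have kl: "(k = l) = (q = p \<and> r = s)"
    proof
      assume "k = l"
      then have "k div m = l div m" "k mod m = l mod m" by auto
      then show "q = p \<and> r = s" using qr ps m by simp
    next
      assume "q = p \<and> r = s"
      then show "k = l" using qr(3) ps(3) by simp
    qed
    have m4: "(4::real)^Suc L = 4 * real m" unfolding m_def by simp
    show ?thesis unfolding IH T kl m4 by (rule fin) (use m in simp)
  qed
  finally show ?case .
qed



lemma le_split:
  fixes m :: nat assumes "r < m" "r' < m"
  shows "(q*m + r \<le> q'*m + r') \<longleftrightarrow> (q < q' \<or> (q = q' \<and> r \<le> r'))"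
proof (cases "q < q'")
  case True
  then have "Suc q * m \<le> q' * m" by (intro mult_le_mono1) simp
  then show ?thesis using assms True by simp
next
  case False
  show ?thesis
  proof (cases "q = q'")
    case True then show ?thesis by simp
  next
    case False2: False
    with False have "q' < q" by simp
    then have "Suc q' * m \<le> q * m" by (intro mult_le_mono1) simp
    then show ?thesis using assms False False2 by simp
  qed
qed

lemma tri_count: "(\<Sum>r'<m. \<Sum>r<m. (if r \<le> r' then 1 else 0 :: real)) = real m * (real m + 1) / 2"
proof -
  have "(\<Sum>r<m. (if r \<le> r' then 1 else 0 :: real)) = real r' + 1" if "r' < m" for r'
  proof -
    have "(\<Sum>r<m. (if r \<le> r' then 1 else 0 :: real)) = real (card {r. r < m \<and> r \<le> r'})"
      by (simp add: sum.If_cases Int_def conj_commute)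
    also have "{r. r < m \<and> r \<le> r'} = {..r'}" using that by auto
    finally show ?thesis by simp
  qed
  then have "(\<Sum>r'<m. \<Sum>r<m. (if r \<le> r' then 1 else 0 :: real)) = (\<Sum>r'<m. real r' + 1)"
    by (intro sum.cong) auto
  also have "\<dots> = real m * (real m + 1) / 2"
    by (induction m) (auto simp: field_simps)
  finally show ?thesis .
qed

lemma count_blocks:
  fixes m :: nat assumes "m > 0"
  shows "(\<Sum>r'<m. \<Sum>r<m. (if q*m + r \<le> q'*m + r' then 1 else 0 :: real)) =
         (if q < q' then real m * real m else if q = q' then real m * (real m + 1) / 2 else 0)"
proof -
  have "(\<Sum>r'<m. \<Sum>r<m. (if q*m + r \<le> q'*m + r' then 1 else 0 :: real)) =
        (\<Sum>r'<m. \<Sum>r<m. (if q < q' \<or> (q = q' \<and> r \<le> r') then 1 else 0 :: real))"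
    by (intro sum.cong refl) (simp add: le_split)
  also have "\<dots> = (if q < q' then real m * real m else if q = q' then real m * (real m + 1) / 2 else 0)"
    using tri_count[of m] by auto
  finally show ?thesis .
qed

lemma delta_aux: "q' < (4::nat) \<Longrightarrow> (\<Sum>q<4. \<Sum>r<m. (if q = q' then g r else 0)) = (\<Sum>r<m. g r :: real)"
proof -
  assume q': "q' < 4"
  have "(\<Sum>q<(4::nat). \<Sum>r<m. (if q = q' then g r else 0)) = (\<Sum>q<(4::nat). if q = q' then (\<Sum>r<m. g r) else 0)"
    by (intro sum.cong) auto
  then show ?thesis using q' by simp
qed

definition Ssum :: "nat \<Rightarrow> real" where
  "Ssum L = (\<Sum>j<4^L. \<Sum>k<4^L. (if k \<le> j then Y L k j else 0))"

lemma Ssum_step: "Ssum (Suc L) = 4 * Ssum L + (4^L - 1/2)"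
proof -
  define m :: nat where "m = 4^L"
  have m: "m > 0" unfolding m_def by simp
  have "Ssum (Suc L) = (\<Sum>q'<4. \<Sum>r'<m. \<Sum>q<4. \<Sum>r<m.
          (if q*m + r \<le> q'*m + r' then Y (Suc L) (q*m+r) (q'*m+r') else 0))"
    unfolding Ssum_def m_def by (simp add: sum_split4 del: Y.simps)
  also have "\<dots> = (\<Sum>q'<4. \<Sum>r'<m. \<Sum>q<4. \<Sum>r<m.
          ((if q = q' then (if r \<le> r' then Y L r r' else 0) else 0)
           + (if q*m + r \<le> q'*m + r' then tau q q' / m else 0)))"
  proof (intro sum.cong refl)
    fix q' r' q r assume "q' \<in> {..<4::nat}" "r' \<in> {..<m}" "q \<in> {..<4::nat}" "r \<in> {..<m}"
    then have b: "r < m" "r' < m" by auto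
    have Ys: "Y (Suc L) (q*m+r) (q'*m+r') = (if q=q' then Y L r r' else 0) + tau q q'/m"
      using Y_step[of r L r' q q'] b unfolding m_def by simp
    show "(if q*m + r \<le> q'*m + r' then Y (Suc L) (q*m+r) (q'*m+r') else 0) =
          ((if q = q' then (if r \<le> r' then Y L r r' else 0) else 0)
           + (if q*m + r \<le> q'*m + r' then tau q q' / m else 0))"
      unfolding Ys using le_split[OF b, of q q'] by auto
  qed
  also have "\<dots> = (\<Sum>q'<(4::nat). \<Sum>r'<m. \<Sum>r<m. (if r \<le> r' then Y L r r' else 0))
         + (\<Sum>q'<4. \<Sum>q<4. tau q q' / m * (\<Sum>r'<m. \<Sum>r<m. (if q*m + r \<le> q'*m + r' then 1 else 0)))"
  proof -
    have p1: "(\<Sum>q'<(4::nat). \<Sum>r'<m. \<Sum>q<(4::nat). \<Sum>r<m. (if q = q' then (if r \<le> r' then Y L r r' else 0) else 0))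
        = (\<Sum>q'<(4::nat). \<Sum>r'<m. \<Sum>r<m. (if r \<le> r' then Y L r r' else 0))"
      by (simp add: delta_aux)
    have p2: "(\<Sum>q'<(4::nat). \<Sum>r'<m. \<Sum>q<(4::nat). \<Sum>r<m. (if q*m + r \<le> q'*m + r' then tau q q' / m else 0))
        = (\<Sum>q'<(4::nat). \<Sum>q<(4::nat). tau q q' / m * (\<Sum>r'<m. \<Sum>r<m. (if q*m + r \<le> q'*m + r' then 1 else 0)))"
    proof (rule sum.cong[OF refl])
      fix q' :: nat
      have e: "(if c then tau q q' / m else 0) = tau q q' / m * (if c then 1 else (0::real))" for c q by simp
      show "(\<Sum>r'<m. \<Sum>q<(4::nat). \<Sum>r<m. (if q*m + r \<le> q'*m + r' then tau q q' / m else 0))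
        = (\<Sum>q<(4::nat). tau q q' / m * (\<Sum>r'<m. \<Sum>r<m. (if q*m + r \<le> q'*m + r' then 1 else 0)))"
        by (subst sum.swap) (simp add: e sum_distrib_left)
    qed
    show ?thesis by (simp only: sum.distrib p1 p2)
  qed
  also have "\<dots> = 4 * Ssum L + (\<Sum>q'<4. \<Sum>q<4. tau q q' *
         (if q < q' then real m else if q = q' then (real m + 1) / 2 else 0))"
  proof -
    have hb: "tau q q' / real m * (if q < q' then real m * real m else if q = q' then real m * (real m + 1) / 2 else 0)
       = tau q q' * (if q < q' then real m else if q = q' then (real m + 1) / 2 else 0)" for q q'
      using m by auto
    show ?thesis unfolding count_blocks[OF m] hb Ssum_def m_def[symmetric] by simp
  qed
  also have "\<dots> = 4 * Ssum L + (4^L - 1/2)"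
    unfolding tau_val m_def by (simp add: field_simps)
  finally show ?thesis .
qed

lemma Ssum_lower: "real L * 4^L / 8 \<le> Ssum L"
proof (induction L)
  case 0 then show ?case by (simp add: Ssum_def)
next
  case (Suc L)
  have "(1::real) \<le> 4^L" by simp
  moreover have "real (Suc L) * 4^Suc L / 8 = 4 * (real L * 4^L / 8) + 4^L/2"
    by (simp add: field_simps)
  ultimately show ?case using Suc unfolding Ssum_step by linarith
qed



lemma lg_4pow: "lg (real (4^L)) = 2 * real L"
proof -
  have "real (4^L) = (2::real)^(2*L)" by (simp add: power_mult)
  then show ?thesis unfolding lg_def by (simp add: log_nat_power)
qed

lemma part1:
  fixes A :: "nat \<Rightarrow> nat \<Rightarrow> real"
  assumes n: "n = 4^L" and L: "L \<ge> 1" and pd: "pos_definite n A"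
  shows "prefix_cost n A \<ge> 1/256 * real n * (lg (real n))\<^sup>2"
proof -
  define B where "B = mat_inv n A"
  have inv: "is_inverse n A B" unfolding B_def by (rule pd_inv[OF pd])
  define Q where "Q i = quad_form n B (vone i)" for i
  define M where "M = Max (Q ` {1..n})"
  define T where "T = mat_trace n A"
  define S where "S = Ssum L"
  have npos: "n > 0" using n by simp
  have QM: "Q (Suc j) \<le> M" if "j < n" for j
    unfolding M_def using that by (intro Max_ge) auto
  have diag: "A k k > 0" if "k < n" for k
  proof -
    have "(\<Sum>i<n. \<Sum>j<n. (if i = k then 1 else 0) * A i j * (if j = k then 1 else 0)) > 0"
      using pd that unfolding pos_definite_def by auto
    moreover have "(\<Sum>i<n. \<Sum>j<n. (if i = k then 1 else 0) * A i j * (if j = k then 1 else 0))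
        = (\<Sum>i<n. if i = k then (\<Sum>j<n. if j = k then A k j else 0) else 0)"
    proof -
      have pw: "(if i = k then 1 else 0) * A i j * (if j = k then 1 else 0) =
                (if i = k then (if j = k then A k j else 0) else (0::real))" for i j by simp
      show ?thesis unfolding pw by (intro sum.cong refl) auto
    qed
    ultimately show ?thesis using that by simp
  qed
  have Tpos: "T > 0" unfolding T_def mat_trace_def using npos diag
    by (intro sum_pos) auto
  have Spos: "S \<ge> real L * real n / 8" unfolding S_def n using Ssum_lower[of L] by simp
  have "real L * real n / 8 > 0" using L npos by simp
  then have Sgt: "S > 0" using Spos by linarith
  have sumA: "(\<Sum>j<n. quad_form n A (\<lambda>k. Y L k j)) \<le> T"
  proof -
    have "(\<Sum>j<n. quad_form n A (\<lambda>k. Y L k j)) = (\<Sum>k<n. \<Sum>l<n. A k l * (\<Sum>j<n. Y L k j * Y L l j))"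
      unfolding quad_form_def
      by (subst sum.swap, rule sum.cong[OF refl], subst sum.swap) (simp add: sum_distrib_left mult_ac)
    also have "\<dots> = (\<Sum>k<n. \<Sum>l<n. A k l * ((if k = l then 1 else 0) - 1 / n))"
      using Y_gram n by (intro sum.cong refl) simp
    also have "\<dots> = T - (\<Sum>k<n. \<Sum>l<n. A k l) / n"
    proof -
      have pw: "A k l * ((if k = l then 1 else 0) - 1 / n) = (if l = k then A k l else 0) - A k l / n" for k l
        by (simp add: algebra_simps)
      show ?thesis unfolding T_def mat_trace_def pw
        by (simp add: sum_subtractf sum_divide_distrib)
    qed
    also have "\<dots> \<le> T"
    proof -
      have "0 \<le> bil n A (\<lambda>_. 1) (\<lambda>_. 1)" by (rule pd_nonneg[OF pd])
      then have "0 \<le> (\<Sum>k<n. \<Sum>l<n. A k l)" unfolding bil_def by simp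
      then show ?thesis using npos by simp
    qed
    finally show ?thesis .
  qed
  have key: "2 * t * S \<le> t^2 * T + real n * M" if t: "t > 0" for t
  proof -
    have each: "2 * t * (\<Sum>k<n. (if k \<le> j then Y L k j else 0)) \<le> t^2 * quad_form n A (\<lambda>k. Y L k j) + M"
      if j: "j < n" for j
    proof -
      have "(\<Sum>k<n. Y L k j * vone (Suc j) k) = (\<Sum>k<n. (if k \<le> j then Y L k j else 0))"
        unfolding vone_def by (intro sum.cong refl) auto
      then show ?thesis using cs_ineq[OF pd inv, of t "\<lambda>k. Y L k j" "vone (Suc j)"] QM[OF j]
        unfolding Q_def by simp
    qed
    have "2 * t * S = (\<Sum>j<n. 2 * t * (\<Sum>k<n. (if k \<le> j then Y L k j else 0)))"
      unfolding S_def Ssum_def n by (simp add: sum_distrib_left)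
    also have "\<dots> \<le> (\<Sum>j<n. t^2 * quad_form n A (\<lambda>k. Y L k j) + M)"
      by (intro sum_mono each) auto
    also have "\<dots> = t^2 * (\<Sum>j<n. quad_form n A (\<lambda>k. Y L k j)) + real n * M"
      by (simp add: sum.distrib sum_distrib_left)
    also have "\<dots> \<le> t^2 * T + real n * M"
      using sumA by (simp add: mult_left_mono)
    finally show ?thesis .
  qed
  have "2 * (S / T) * S \<le> (S / T)^2 * T + real n * M" using Sgt Tpos by (intro key) simp
  then have "S^2 / T \<le> real n * M" using Tpos by (simp add: power2_eq_square field_simps)
  then have S2: "S^2 \<le> real n * (T * M)" using Tpos by (simp add: field_simps)
  have "1/256 * real n * (lg (real n))\<^sup>2 = (real L * real n / 8)^2 / real n"
    unfolding n lg_4pow using npos n by (simp add: power2_eq_square field_simps)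
  also have "\<dots> \<le> S^2 / real n"
    using Spos L by (intro divide_right_mono power_mono) auto
  also have "\<dots> \<le> T * M" using S2 npos by (simp add: field_simps)
  finally show ?thesis unfolding prefix_cost_def T_def M_def Q_def B_def .
qed



definition Cm :: "nat \<Rightarrow> nat \<Rightarrow> nat \<Rightarrow> real" where
  "Cm l k b = (if k div 2^l = b then 1 else 0)"

lemma div_mono_eq:
  assumes "k div 2^a = j div (2::nat)^a" "a \<le> c"
  shows "k div 2^c = j div 2^c"
proof -
  have p: "(2::nat)^c = 2^a * 2^(c-a)" using assms(2) by (simp add: power_add[symmetric])
  have "k div 2^c = (k div 2^a) div 2^(c-a)" "j div 2^c = (j div 2^a) div 2^(c-a)"
    unfolding p by (simp_all add: div_mult2_eq)
  then show ?thesis using assms(1) by simp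
qed

lemma tree_formula:
  assumes n: "n = 2^L" and k: "k < n" and j: "j < n"
  shows "tree_mat n k j = (\<Sum>l<L. if k div 2^l = j div 2^l then 1 else 0)"
proof -
  define k0 where "k0 = (LEAST t::nat. k div 2^t = j div 2^t)"
  have exL: "k div 2^L = j div 2^L" using k j n by simp
  have k0L: "k0 \<le> L" unfolding k0_def by (rule Least_le) (rule exL)
  have k0eq: "k div 2^k0 = j div 2^k0" unfolding k0_def by (rule LeastI) (rule exL)
  have iff: "(k div 2^l = j div 2^l) \<longleftrightarrow> k0 \<le> l" for l
  proof
    assume "k div 2^l = j div 2^l" then show "k0 \<le> l" unfolding k0_def by (rule Least_le)
  next
    assume "k0 \<le> l" then show "k div 2^l = j div 2^l" using div_mono_eq[OF k0eq] by blast
  qed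
  have "(\<Sum>l<L. if k div 2^l = j div 2^l then 1 else 0) = (\<Sum>l<L. if k0 \<le> l then 1 else (0::real))"
    using iff by simp
  also have "\<dots> = real (card {l. l < L \<and> k0 \<le> l})"
    by (simp add: sum.If_cases Int_def conj_commute)
  also have "{l. l < L \<and> k0 \<le> l} = {k0..<L}" by auto
  finally have "(\<Sum>l<L. if k div 2^l = j div 2^l then 1 else 0) = real L - real k0"
    using k0L by simp
  moreover have "lg (real n) = real L" unfolding n lg_def by (simp add: log_nat_power)
  ultimately show ?thesis unfolding tree_mat_def k0_def by simp
qed

lemma Cm_prod: "k < n \<Longrightarrow> j < n \<Longrightarrow> (\<Sum>b<n. Cm l k b * Cm l j b) = (if k div 2^l = j div 2^l then 1 else 0)"
proof -
  assume k: "k < n" and j: "j < n"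
  have "k div 2^l < n" using k by (meson div_le_dividend le_less_trans)
  have "(\<Sum>b<n. Cm l k b * Cm l j b) = (\<Sum>b<n. if b = k div 2^l then (if j div 2^l = b then 1 else 0) else 0)"
    unfolding Cm_def by (intro sum.cong refl) auto
  also have "\<dots> = (if k div 2^l = j div 2^l then 1 else 0)" using \<open>k div 2^l < n\<close> by auto
  finally show ?thesis .
qed

lemma tree_C:
  assumes n: "n = 2^L" and k: "k < n" and j: "j < n"
  shows "tree_mat n k j = (\<Sum>l<L. \<Sum>b<n. Cm l k b * Cm l j b)"
  unfolding tree_formula[OF assms] using Cm_prod[OF k j] by simp

lemma quad_C:
  fixes A :: "nat \<Rightarrow> nat \<Rightarrow> real"
  assumes Af: "\<And>k j. k < n \<Longrightarrow> j < n \<Longrightarrow> A k j = (\<Sum>l<L. \<Sum>b<n. C l k b * C l j b)"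
  shows "(\<Sum>k<n. \<Sum>j<n. x k * A k j * y j) =
     (\<Sum>l<L. \<Sum>b<n. (\<Sum>k<n. C l k b * x k) * (\<Sum>j<n. C l j b * y j))"
proof -
  have "(\<Sum>k<n. \<Sum>j<n. x k * A k j * y j) = (\<Sum>k<n. \<Sum>j<n. \<Sum>l<L. \<Sum>b<n. x k * C l k b * C l j b * y j)"
    using Af by (intro sum.cong refl) (simp add: sum_distrib_left sum_distrib_right mult_ac)
  also have "\<dots> = (\<Sum>l<L. \<Sum>b<n. \<Sum>k<n. \<Sum>j<n. x k * C l k b * C l j b * y j)"
  proof -
    let ?f = "\<lambda>k j l b. x k * C l k b * C l j b * y j"
    have "(\<Sum>k<n. \<Sum>j<n. \<Sum>l<L. \<Sum>b<n. ?f k j l b) = (\<Sum>k<n. \<Sum>l<L. \<Sum>j<n. \<Sum>b<n. ?f k j l b)"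
      by (rule sum.cong[OF refl], rule sum.swap)
    also have "\<dots> = (\<Sum>k<n. \<Sum>l<L. \<Sum>b<n. \<Sum>j<n. ?f k j l b)"
      by (rule sum.cong[OF refl], rule sum.cong[OF refl], rule sum.swap)
    also have "\<dots> = (\<Sum>l<L. \<Sum>k<n. \<Sum>b<n. \<Sum>j<n. ?f k j l b)"
      by (rule sum.swap)
    also have "\<dots> = (\<Sum>l<L. \<Sum>b<n. \<Sum>k<n. \<Sum>j<n. ?f k j l b)"
      by (rule sum.cong[OF refl], rule sum.swap)
    finally show ?thesis by simp
  qed
  also have "\<dots> = (\<Sum>l<L. \<Sum>b<n. (\<Sum>k<n. C l k b * x k) * (\<Sum>j<n. C l j b * y j))"
    by (simp add: sum_product mult_ac)
  finally show ?thesis .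
qed


lemma tree_pd:
  assumes n: "n = 2^L" and L: "L \<ge> 1"
  shows "pos_definite n (tree_mat n)"
  unfolding pos_definite_def
proof (intro conjI allI impI)
  fix i j assume "i < n" "j < n"
  then show "tree_mat n i j = tree_mat n j i" using tree_C[OF n] by (simp add: mult.commute)
next
  fix x :: "nat \<Rightarrow> real" assume ex: "\<exists>i<n. x i \<noteq> 0"
  have q: "(\<Sum>i<n. \<Sum>j<n. x i * tree_mat n i j * x j) =
      (\<Sum>l<L. \<Sum>b<n. (\<Sum>k<n. Cm l k b * x k) * (\<Sum>j<n. Cm l j b * x j))"
    by (rule quad_C) (rule tree_C[OF n])
  have lev0: "(\<Sum>k<n. Cm 0 k b * x k) = x b" if "b < n" for b
  proof -
    have "(\<Sum>k<n. Cm 0 k b * x k) = (\<Sum>k<n. if k = b then x b else 0)"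
      unfolding Cm_def by (intro sum.cong refl) auto
    then show ?thesis using that by simp
  qed
  have "0 < (\<Sum>b<n. x b * x b)"
  proof -
    from ex obtain i where i: "i < n" "x i \<noteq> 0" by auto
    have "0 < x i * x i" using i(2) not_real_square_gt_zero by blast
    also have "\<dots> \<le> (\<Sum>b<n. x b * x b)"
      using i by (intro member_le_sum) auto
    finally show ?thesis .
  qed
  also have "\<dots> = (\<Sum>b<n. (\<Sum>k<n. Cm 0 k b * x k) * (\<Sum>j<n. Cm 0 j b * x j))"
    using lev0 by simp
  also have "\<dots> \<le> (\<Sum>l<L. \<Sum>b<n. (\<Sum>k<n. Cm l k b * x k) * (\<Sum>j<n. Cm l j b * x j))"
    using L by (intro member_le_sum[where i = 0 and f = "\<lambda>l. \<Sum>b<n. (\<Sum>k<n. Cm l k b * x k) * (\<Sum>j<n. Cm l j b * x j)"]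
                     sum_nonneg) auto
  finally show "0 < (\<Sum>i<n. \<Sum>j<n. x i * tree_mat n i j * x j)" unfolding q .
qed

lemma two_ab: "2 * (a * b) \<le> a^2 + (b::real)^2"
proof -
  have "0 \<le> (a - b)^2" by simp
  then show ?thesis by (simp add: power2_diff mult.assoc)
qed

lemma Q_bound:
  fixes A :: "nat \<Rightarrow> nat \<Rightarrow> real"
  assumes Af: "\<And>k j. k < n \<Longrightarrow> j < n \<Longrightarrow> A k j = (\<Sum>l<L. \<Sum>b<n. C l k b * C l j b)"
    and Ax: "\<And>k. k < n \<Longrightarrow> (\<Sum>j<n. A k j * x j) = v k"
    and vf: "\<And>k. k < n \<Longrightarrow> v k = (\<Sum>l<L. \<Sum>b<n. C l k b * c l b)"
  shows "(\<Sum>k<n. x k * v k) \<le> (\<Sum>l<L. \<Sum>b<n. (c l b)^2)"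
proof -
  define y where "y l b = (\<Sum>k<n. C l k b * x k)" for l b
  have Q1: "(\<Sum>k<n. x k * v k) = (\<Sum>l<L. \<Sum>b<n. c l b * y l b)"
  proof -
    have "(\<Sum>k<n. x k * v k) = (\<Sum>k<n. \<Sum>l<L. \<Sum>b<n. x k * C l k b * c l b)"
      using vf by (intro sum.cong refl) (simp add: sum_distrib_left mult_ac)
    also have "\<dots> = (\<Sum>l<L. \<Sum>k<n. \<Sum>b<n. x k * C l k b * c l b)" by (rule sum.swap)
    also have "\<dots> = (\<Sum>l<L. \<Sum>b<n. \<Sum>k<n. x k * C l k b * c l b)"
      by (rule sum.cong[OF refl], rule sum.swap)
    also have "\<dots> = (\<Sum>l<L. \<Sum>b<n. c l b * y l b)"
      unfolding y_def by (simp add: sum_distrib_left mult_ac)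
    finally show ?thesis .
  qed
  have Q2: "(\<Sum>k<n. x k * v k) = (\<Sum>l<L. \<Sum>b<n. (y l b)^2)"
  proof -
    have "(\<Sum>k<n. x k * v k) = (\<Sum>k<n. \<Sum>j<n. x k * A k j * x j)"
    proof (rule sum.cong[OF refl])
      fix k assume "k \<in> {..<n}"
      then have "v k = (\<Sum>j<n. A k j * x j)" using Ax by simp
      then show "x k * v k = (\<Sum>j<n. x k * A k j * x j)" by (simp add: sum_distrib_left mult.assoc)
    qed
    also have "\<dots> = (\<Sum>l<L. \<Sum>b<n. (\<Sum>k<n. C l k b * x k) * (\<Sum>j<n. C l j b * x j))"
      by (rule quad_C) (rule Af)
    finally show ?thesis unfolding y_def by (simp add: power2_eq_square)
  qed
  have "2 * (\<Sum>k<n. x k * v k) \<le> (\<Sum>l<L. \<Sum>b<n. (c l b)^2) + (\<Sum>l<L. \<Sum>b<n. (y l b)^2)"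
  proof -
    have "2 * (\<Sum>l<L. \<Sum>b<n. c l b * y l b) = (\<Sum>l<L. \<Sum>b<n. 2 * (c l b * y l b))"
      by (simp add: sum_distrib_left)
    also have "\<dots> \<le> (\<Sum>l<L. \<Sum>b<n. (c l b)^2 + (y l b)^2)"
      by (intro sum_mono two_ab)
    also have "\<dots> = (\<Sum>l<L. \<Sum>b<n. (c l b)^2) + (\<Sum>l<L. \<Sum>b<n. (y l b)^2)"
      by (simp add: sum.distrib)
    finally show ?thesis unfolding Q1 .
  qed
  then show ?thesis unfolding Q2 by simp
qed


definition cf :: "nat \<Rightarrow> nat \<Rightarrow> nat \<Rightarrow> nat \<Rightarrow> real" where
  "cf L i l b = (if b < i div 2^l then 1 else 0)
     - (if Suc l = L then 0 else (if b div 2 < i div 2^(Suc l) then 1 else 0))"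

lemma div2_pow: "(k::nat) div 2^l div 2 = k div 2^Suc l"
  by (simp add: div_mult2_eq[symmetric] power_Suc2 mult.commute)

lemma vform:
  assumes n: "n = 2^L" and L: "L \<ge> 1" and k: "k < n"
  shows "vone i k = (\<Sum>l<L. \<Sum>b<n. Cm l k b * cf L i l b)"
proof -
  define w where "w l = (if k div 2^l < i div 2^l then 1 else 0 :: real)" for l
  have kl: "k div 2^l < n" for l using k by (meson div_le_dividend le_less_trans)
  have inner: "(\<Sum>b<n. Cm l k b * cf L i l b) = w l - (if Suc l = L then 0 else w (Suc l))" for l
  proof -
    have "(\<Sum>b<n. Cm l k b * cf L i l b) = (\<Sum>b<n. if b = k div 2^l then cf L i l (k div 2^l) else 0)"
      unfolding Cm_def by (intro sum.cong refl) auto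
    also have "\<dots> = cf L i l (k div 2^l)" using kl[of l] by simp
    also have "\<dots> = w l - (if Suc l = L then 0 else w (Suc l))"
      unfolding cf_def w_def div2_pow by simp
    finally show ?thesis .
  qed
  obtain L' where L': "L = Suc L'" using L by (cases L) auto
  have "(\<Sum>l<L. \<Sum>b<n. Cm l k b * cf L i l b) = (\<Sum>l<L. w l - (if Suc l = L then 0 else w (Suc l)))"
    using inner by simp
  also have "\<dots> = (\<Sum>l<L'. w l - w (Suc l)) + w L'"
    unfolding L' by simp
  also have "\<dots> = w 0" by (simp add: sum_lessThan_telescope')
  finally show ?thesis unfolding vone_def w_def by simp
qed

lemma count_ind: "a \<le> n \<Longrightarrow> (\<Sum>b<n. (if m \<le> b \<and> b < a then 1 else 0 :: real)) = real (a - m)"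
proof -
  assume a: "a \<le> n"
  have "(\<Sum>b<n. (if m \<le> b \<and> b < a then 1 else 0 :: real)) = real (card {b. b < n \<and> m \<le> b \<and> b < a})"
    by (simp add: sum.If_cases Int_def conj_commute)
  also have "{b. b < n \<and> m \<le> b \<and> b < a} = {m..<a}" using a by auto
  finally show ?thesis by simp
qed

lemma level_mid:
  assumes "Suc l \<noteq> L" and "i \<le> n"
  shows "(\<Sum>b<n. (cf L i l b)^2) \<le> real ((i div 2^l) mod 2)"
proof -
  define a where "a = i div 2^l"
  have an: "a \<le> n" unfolding a_def using assms(2) by (meson div_le_dividend le_trans)
  have pw: "(cf L i l b)^2 \<le> (if 2 * (a div 2) \<le> b \<and> b < a then 1 else 0)" for b
  proof -
    have cfe: "cf L i l b = (if b < a then 1 else 0) - (if b div 2 < a div 2 then 1 else 0)"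
      unfolding cf_def a_def using assms(1) div2_pow[of i l] by simp
    show ?thesis
    proof (cases "b div 2 < a div 2")
      case True
      then have "b < a" by (meson div_le_mono le_less_trans not_le)
      then show ?thesis unfolding cfe using True by simp
    next
      case False
      then have "2 * (a div 2) \<le> b" by auto
      then show ?thesis unfolding cfe using False by simp
    qed
  qed
  have "(\<Sum>b<n. (cf L i l b)^2) \<le> (\<Sum>b<n. (if 2 * (a div 2) \<le> b \<and> b < a then 1 else 0 :: real))"
    by (intro sum_mono pw)
  also have "\<dots> = real (a - 2 * (a div 2))" using count_ind[OF an] by simp
  also have "a - 2 * (a div 2) = a mod 2" by (rule minus_mult_div_eq_mod)
  finally show ?thesis unfolding a_def .
qed

lemma level_top:
  assumes "Suc l = L" and "i \<le> n"
  shows "(\<Sum>b<n. (cf L i l b)^2) \<le> real (i div 2^l)"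
proof -
  define a where "a = i div 2^l"
  have an: "a \<le> n" unfolding a_def using assms(2) by (meson div_le_dividend le_trans)
  have "(\<Sum>b<n. (cf L i l b)^2) = (\<Sum>b<n. (if 0 \<le> b \<and> b < a then 1 else 0 :: real))"
    unfolding cf_def a_def using assms(1) by (intro sum.cong refl) simp
  also have "\<dots> = real a" using count_ind[OF an, of 0] by simp
  finally show ?thesis unfolding a_def by simp
qed

lemma cbound:
  assumes n: "n = 2^L" and L: "L \<ge> 2" and i: "1 \<le> i" "i \<le> n"
  shows "(\<Sum>l<L. \<Sum>b<n. (cf L i l b)^2) \<le> real L"
proof -
  obtain L' where L': "L = Suc L'" using L by (cases L) auto
  have "(\<Sum>l<L. \<Sum>b<n. (cf L i l b)^2) = (\<Sum>l<L'. \<Sum>b<n. (cf L i l b)^2) + (\<Sum>b<n. (cf L i L' b)^2)"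
    unfolding L' by simp
  also have "\<dots> \<le> (\<Sum>l<L'. real ((i div 2^l) mod 2)) + real (i div 2^L')"
    using i(2) L' by (intro add_mono sum_mono level_mid level_top) auto
  also have "\<dots> \<le> real L"
  proof (cases "i = n")
    case True
    have "(i div 2^l) mod 2 = 0" if "l < L'" for l
    proof -
      have "i div 2^l = 2^(L - l)" unfolding True n using that L'
        by (simp add: power_diff)
      moreover have "L - l = Suc (L - Suc l)" using that L' by simp
      ultimately show ?thesis by simp
    qed
    then have "(\<Sum>l<L'. real ((i div 2^l) mod 2)) = 0" by simp
    moreover have "i div 2^L' = 2" unfolding True n L' by simp
    ultimately show ?thesis using L by simp
  next
    case False
    then have ilt: "i < 2 * 2^L'" using i(2) n L' by simp
    have "(\<Sum>l<L'. real ((i div 2^l) mod 2)) \<le> (\<Sum>l<L'. 1)"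
      by (intro sum_mono) simp
    moreover have "i div 2^L' \<le> 1"
      using ilt by (simp add: less_mult_imp_div_less less_Suc_eq_le[symmetric])
    ultimately show ?thesis unfolding L' by simp
  qed
  finally show ?thesis .
qed


lemma inv_apply:
  assumes inv: "is_inverse n A B" and k: "k < n"
  shows "(\<Sum>l<n. A k l * (\<Sum>m<n. B l m * v m)) = v k"
proof -
  have "(\<Sum>l<n. A k l * (\<Sum>m<n. B l m * v m)) = (\<Sum>l<n. \<Sum>m<n. A k l * B l m * v m)"
    by (simp add: sum_distrib_left mult.assoc)
  also have "\<dots> = (\<Sum>m<n. (\<Sum>l<n. A k l * B l m) * v m)"
    by (subst sum.swap) (simp add: sum_distrib_right)
  also have "\<dots> = (\<Sum>m<n. (if k = m then v m else 0))"
    using inv k unfolding is_inverse_def by (intro sum.cong) auto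
  also have "\<dots> = v k" using k by (simp add: sum.delta)
  finally show ?thesis .
qed

lemma quad_as: "quad_form n B v = (\<Sum>k<n. (\<Sum>l<n. B k l * v l) * v k)"
  unfolding quad_form_def
  by (simp add: sum_distrib_left sum_distrib_right mult.commute mult.left_commute)

lemma part2:
  assumes n: "n = 2^L" and n4: "n \<ge> 4"
  shows "prefix_cost n (tree_mat n) \<le> real n * (lg (real n))\<^sup>2"
proof -
  have L2: "L \<ge> 2"
  proof (rule ccontr)
    assume "\<not> L \<ge> 2"
    then have "L \<le> 1" by simp
    then have "n \<le> 2^1" unfolding n by (intro power_increasing) auto
    then show False using n4 by simp
  qed
  then have L1: "L \<ge> 1" by simp
  define A where "A = tree_mat n"
  define B where "B = mat_inv n A"
  have pd: "pos_definite n A" unfolding A_def by (rule tree_pd[OF n L1])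
  have inv: "is_inverse n A B" unfolding B_def by (rule pd_inv[OF pd])
  have lgn: "lg (real n) = real L" unfolding n lg_def by (simp add: log_nat_power)
  have Qb: "quad_form n B (vone i) \<le> real L" if i: "i \<in> {1..n}" for i
  proof -
    define x where "x k = (\<Sum>l<n. B k l * vone i l)" for k
    have "quad_form n B (vone i) = (\<Sum>k<n. x k * vone i k)"
      unfolding quad_as x_def ..
    also have "\<dots> \<le> (\<Sum>l<L. \<Sum>b<n. (cf L i l b)^2)"
    proof (rule Q_bound)
      fix k j assume "k < n" "j < n"
      then show "A k j = (\<Sum>l<L. \<Sum>b<n. Cm l k b * Cm l j b)" unfolding A_def by (rule tree_C[OF n])
    next
      fix k assume "k < n"
      then show "(\<Sum>j<n. A k j * x j) = vone i k" unfolding x_def by (rule inv_apply[OF inv])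
    next
      fix k assume "k < n"
      then show "vone i k = (\<Sum>l<L. \<Sum>b<n. Cm l k b * cf L i l b)" by (rule vform[OF n L1])
    qed
    also have "\<dots> \<le> real L" using i by (intro cbound[OF n L2]) auto
    finally show ?thesis .
  qed
  have M: "Max ((\<lambda>i. quad_form n B (vone i)) ` {1..n}) \<le> real L"
    using n4 Qb by (subst Max_le_iff) auto
  have T: "mat_trace n A = real n * real L"
  proof -
    have "mat_trace n A = (\<Sum>k<n. real L)"
      unfolding mat_trace_def A_def by (intro sum.cong refl) (simp add: tree_formula[OF n])
    then show ?thesis by simp
  qed
  have "prefix_cost n (tree_mat n) = real n * real L * Max ((\<lambda>i. quad_form n B (vone i)) ` {1..n})"
    unfolding prefix_cost_def T[unfolded A_def] B_def A_def ..
  also have "\<dots> \<le> real n * real L * real L"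
    using M by (intro mult_left_mono) auto
  finally show ?thesis unfolding lgn by (simp add: power2_eq_square mult.assoc)
qed


theorem corollary3p3:
  shows "(\<exists>c>0. \<forall>n::nat. \<forall>A :: nat \<Rightarrow> nat \<Rightarrow> real.
            (\<exists>m::nat. n = 4 ^ m) \<longrightarrow> n \<ge> 4 \<longrightarrow> pos_definite n A \<longrightarrow>
            prefix_cost n A \<ge> c * real n * (lg (real n))\<^sup>2)
       \<and> (\<forall>n::nat. (\<exists>m::nat. n = 2 ^ m) \<longrightarrow> n \<ge> 4 \<longrightarrow>
            prefix_cost n (tree_mat n) \<le> real n * (lg (real n))\<^sup>2)"
proof (intro conjI)
  show "\<exists>c>0. \<forall>n::nat. \<forall>A :: nat \<Rightarrow> nat \<Rightarrow> real.
            (\<exists>m::nat. n = 4 ^ m) \<longrightarrow> n \<ge> 4 \<longrightarrow> pos_definite n A \<longrightarrow>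
            prefix_cost n A \<ge> c * real n * (lg (real n))\<^sup>2"
  proof (intro exI[of _ "1/256"] conjI allI impI)
    fix n :: nat and A :: "nat \<Rightarrow> nat \<Rightarrow> real"
    assume ex: "\<exists>m::nat. n = 4 ^ m" and n4: "n \<ge> 4" and pd: "pos_definite n A"
    then obtain m where m: "n = 4^m" by auto
    have "m \<ge> 1" using m n4 by (cases m) auto
    then show "prefix_cost n A \<ge> 1/256 * real n * (lg (real n))\<^sup>2"
      by (rule part1[OF m _ pd])
  qed simp
next
  show "\<forall>n::nat. (\<exists>m::nat. n = 2 ^ m) \<longrightarrow> n \<ge> 4 \<longrightarrow>
            prefix_cost n (tree_mat n) \<le> real n * (lg (real n))\<^sup>2"
    using part2 by blast
qed

end
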